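(* Let $\Phi:\mathbb{R}_{++}^{n\times m}\to\mathbb{R}$ be a convex function which is positively 1-homogeneous ($\Phi(tA)=t\Phi(A)$ for all $t>0$). Then for every $p\in\mathcal{P}_{n-1}$, $q\in\mathcal{P}_{m-1}$, \[ \inf_{P\in\Pi(p,q)}\Phi(P)=\sup\Big\{\langle p,\alpha\rangle+\langle q,\beta\rangle\ :\ \alpha\in\mathbb{R}^n,\ \beta\in\mathbb{R}^m,\ \Phi^*(\alpha\oplus\beta)=0\Big\}. \]
   Context: $\mathbb{R}_{++}^{n\times m}$ denotes the set of real $n\times m$ matrices with all entries strictly positive. $\mathcal{P}_{n-1}=\{p\in\mathbb{R}^n:\sum_i p_i=1,\ p_i>0\}$, similarly $\mathcal{P}_{m-1}$. $\Pi(p,q)=\{P\in\mathbb{R}_{++}^{n\times m}:\sum_j P_{ij}=p_i\ \forall i,\ \sum_i P_{ij}=q_j\ \forall j\}$. The Legendre transform is $\Phi^*(u)=\sup_{A\in\mathbb{R}_{++}^{n\times m}}\{\langle A,u\rangle-\Phi(A)\}\in\mathbb{R}\cup\{+\infty\}$ with $\langle A,u\rangle=\sum_{i,j}A_{ij}u^{ij}$, and $(\alpha\oplus\beta)^{ij}=\alpha^i+\beta^j$. *)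

theory Defs
  imports "HOL-Analysis.Analysis"
begin

text \<open>Matrices in R^{n x m} are rendered as real^'m^'n (rows indexed by 'n, columns by 'm).\<close>

definition pos_mats :: "(real^'m^'n) set" where
  "pos_mats = {A. \<forall>i j. A $ i $ j > 0}"

definition prob_simplex :: "(real^'n) set" where
  "prob_simplex = {p. (\<forall>i. p $ i > 0) \<and> (\<Sum>i\<in>UNIV. p $ i) = 1}"

definition transport_plans :: "real^'n \<Rightarrow> real^'m \<Rightarrow> (real^'m^'n) set" where
  "transport_plans p q = {P \<in> pos_mats.
      (\<forall>i. (\<Sum>j\<in>UNIV. P $ i $ j) = p $ i) \<and> (\<forall>j. (\<Sum>i\<in>UNIV. P $ i $ j) = q $ j)}"

definition mat_pair :: "real^'m^'n \<Rightarrow> real^'m^'n \<Rightarrow> real" where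
  "mat_pair A u = (\<Sum>i\<in>UNIV. \<Sum>j\<in>UNIV. A $ i $ j * u $ i $ j)"

definition legendre :: "(real^'m^'n \<Rightarrow> real) \<Rightarrow> real^'m^'n \<Rightarrow> ereal" where
  "legendre \<Phi> u = (SUP A\<in>pos_mats. ereal (mat_pair A u - \<Phi> A))"

definition oplus :: "real^'n \<Rightarrow> real^'m \<Rightarrow> real^'m^'n" where
  "oplus \<alpha> \<beta> = (\<chi> i j. \<alpha> $ i + \<beta> $ j)"

end

theory Submission
  imports Defs
begin


definition rowsum :: "real^'m^'n \<Rightarrow> real^'n" where "rowsum A = (\<chi> i. \<Sum>j\<in>UNIV. A$i$j)"
definition colsum :: "real^'m^'n \<Rightarrow> real^'m" where "colsum A = (\<chi> j. \<Sum>i\<in>UNIV. A$i$j)"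

lemma mp_oplus: "mat_pair A (oplus a b) = a \<bullet> rowsum A + b \<bullet> colsum A"
proof -
  have "mat_pair A (oplus a b) = (\<Sum>i\<in>UNIV. \<Sum>j\<in>UNIV. A$i$j * a$i) + (\<Sum>i\<in>UNIV. \<Sum>j\<in>UNIV. A$i$j * b$j)"
    unfolding mat_pair_def oplus_def by (simp add: distrib_left sum.distrib)
  also have "(\<Sum>i\<in>UNIV. \<Sum>j\<in>UNIV. A$i$j * a$i) = a \<bullet> rowsum A"
    unfolding inner_vec_def rowsum_def by (simp add: sum_distrib_left mult_ac)
  also have "(\<Sum>i\<in>UNIV. \<Sum>j\<in>UNIV. A$i$j * b$j) = (\<Sum>j\<in>UNIV. \<Sum>i\<in>UNIV. A$i$j * b$j)"
    by (rule sum.swap)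
  also have "\<dots> = b \<bullet> colsum A"
    unfolding inner_vec_def colsum_def by (simp add: sum_distrib_left mult_ac)
  finally show ?thesis .
qed

lemma tp_iff: "P \<in> transport_plans p q \<longleftrightarrow> P \<in> pos_mats \<and> rowsum P = p \<and> colsum P = q"
  unfolding transport_plans_def rowsum_def colsum_def by (auto simp: vec_eq_iff)

lemma mp_scale: "mat_pair (t *\<^sub>R A) u = t * mat_pair A u"
  unfolding mat_pair_def by (simp add: sum_distrib_left mult.assoc)

lemma ones_pos: "(\<chi> i j. 1) \<in> pos_mats" unfolding pos_mats_def by simp

lemma scale_pos: "t > 0 \<Longrightarrow> A \<in> pos_mats \<Longrightarrow> t *\<^sub>R A \<in> pos_mats"
  unfolding pos_mats_def by simp

lemma legendre_le:
  assumes "legendre \<Phi> u = 0" "A \<in> pos_mats" shows "mat_pair A u \<le> \<Phi> A"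
proof -
  have "ereal (mat_pair A u - \<Phi> A) \<le> legendre \<Phi> u"
    unfolding legendre_def by (rule SUP_upper) (rule assms(2))
  then have "ereal (mat_pair A u - \<Phi> A) \<le> 0" using assms(1) by simp
  then show ?thesis by (simp add: zero_ereal_def)
qed

lemma legendre_zero:
  assumes hom: "\<And>t A. t > 0 \<Longrightarrow> A \<in> pos_mats \<Longrightarrow> \<Phi> (t *\<^sub>R A) = t * \<Phi> A"
    and le: "\<And>A. A \<in> pos_mats \<Longrightarrow> mat_pair A u \<le> \<Phi> A"
  shows "legendre \<Phi> u = 0"
proof (rule antisym)
  show "legendre \<Phi> u \<le> 0" unfolding legendre_def
    by (rule SUP_least) (simp add: le)
  define A0 :: "real^'a^'b" where "A0 = (\<chi> i j. 1)"
  have A0: "A0 \<in> pos_mats" using ones_pos A0_def by simp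
  define c where "c = mat_pair A0 u - \<Phi> A0"
  have c: "c \<le> 0" using le[OF A0] c_def by simp
  show "0 \<le> legendre \<Phi> u"
  proof (rule ereal_le_epsilon2)
    fix e :: real assume e: "0 < e"
    define t where "t = e / (1 - c)"
    have t: "t > 0" using e c t_def by simp
    have h1: "ereal (mat_pair (t *\<^sub>R A0) u - \<Phi> (t *\<^sub>R A0)) \<le> legendre \<Phi> u"
      unfolding legendre_def by (rule SUP_upper) (use scale_pos[OF t A0] in auto)
    have h2: "mat_pair (t *\<^sub>R A0) u - \<Phi> (t *\<^sub>R A0) = t * c"
      using hom[OF t A0] mp_scale[of t A0 u] unfolding c_def by (simp add: right_diff_distrib)
    have tc: "t * c \<ge> - e"
    proof -
      have q: "c/(1-c) \<ge> -1" using c by (subst pos_le_divide_eq) auto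
      have "t * c = e * (c/(1 - c))" using t_def by simp
      also have "\<dots> \<ge> e * (-1)" using e q by (intro mult_left_mono) auto
      finally show ?thesis by simp
    qed
    have h3: "ereal (t * c) \<le> legendre \<Phi> u" using h1 unfolding h2 .
    have h4: "ereal (-e) \<le> ereal (t * c)" using tc by simp
    have "ereal (-e) \<le> legendre \<Phi> u" using order_trans[OF h4 h3] .
    then have "ereal (-e) + ereal e \<le> legendre \<Phi> u + ereal e" by (rule add_right_mono)
    then show "0 \<le> legendre \<Phi> u + ereal e" by (simp add: zero_ereal_def)
  qed
qed


lemma rowsum_lin: "rowsum (u *\<^sub>R A + w *\<^sub>R B) = u *\<^sub>R rowsum A + w *\<^sub>R rowsum B"
  unfolding rowsum_def by (simp add: vec_eq_iff sum.distrib sum_distrib_left)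
lemma colsum_lin: "colsum (u *\<^sub>R A + w *\<^sub>R B) = u *\<^sub>R colsum A + w *\<^sub>R colsum B"
  unfolding colsum_def by (simp add: vec_eq_iff sum.distrib sum_distrib_left)

lemma aux_lin0: fixes K s :: real assumes "\<And>t. 0 \<le> K + t * s" shows "s = 0"
proof (rule ccontr)
  assume s: "s \<noteq> 0"
  have "0 \<le> K + (-(\<bar>K\<bar>+1)/s) * s" by (rule assms)
  also have "(-(\<bar>K\<bar>+1)/s) * s = -(\<bar>K\<bar>+1)" using s by simp
  finally show False by simp
qed

lemma aux_pos: fixes K c :: real assumes "\<And>R. R > 0 \<Longrightarrow> 0 \<le> K + c * R" shows "0 \<le> c"
proof (rule ccontr)
  assume c: "\<not> 0 \<le> c"
  have pos: "(\<bar>K\<bar>+1)/(-c) > 0" using c by (intro divide_pos_pos) auto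
  have "0 \<le> K + c * ((\<bar>K\<bar>+1)/(-c))" using assms[OF pos] .
  also have "c * ((\<bar>K\<bar>+1)/(-c)) = -(\<bar>K\<bar>+1)" using c by simp
  finally show False by simp
qed

lemma aux_lim: fixes K c :: real assumes "\<And>d. d > 0 \<Longrightarrow> 0 \<le> K + c * d" "0 \<le> c" shows "0 \<le> K"
proof (rule ccontr)
  assume K: "\<not> 0 \<le> K"
  show False
  proof (cases "c = 0")
    case True then show False using assms(1)[of 1] K by simp
  next
    case False
    then have c: "c > 0" using assms(2) by simp
    have pos: "-K/(2*c) > 0" using c K by (intro divide_pos_pos) auto
    have "0 \<le> K + c * (-K/(2*c))" using assms(1)[OF pos] .
    also have "c * (-K/(2*c)) = -K/2" using c by simp
    finally show False using K by simp
  qed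
qed

lemma aux_y: fixes K y :: real assumes "\<And>t. t > 0 \<Longrightarrow> K \<le> t * y" shows "0 \<le> y"
proof (rule ccontr)
  assume y: "\<not> 0 \<le> y"
  have pos: "(\<bar>K\<bar>+1)/(-y) > 0" using y by (intro divide_pos_pos) auto
  have "K \<le> ((\<bar>K\<bar>+1)/(-y)) * y" using assms[OF pos] .
  also have "((\<bar>K\<bar>+1)/(-y)) * y = -(\<bar>K\<bar>+1)" using y by simp
  finally show False by simp
qed

lemma aux_K: fixes K y :: real assumes "\<And>t. t > 0 \<Longrightarrow> K \<le> t * y" shows "K \<le> 0"
proof (rule ccontr)
  assume K: "\<not> K \<le> 0"
  have pos: "K/(2*(\<bar>y\<bar>+1)) > 0" using K by (intro divide_pos_pos) auto
  have "K \<le> (K/(2*(\<bar>y\<bar>+1))) * y" using assms[OF pos] .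
  also have "\<dots> \<le> (K/(2*(\<bar>y\<bar>+1))) * \<bar>y\<bar>" using pos by (intro mult_left_mono) auto
  also have "\<dots> < K"
  proof -
    have q: "\<bar>y\<bar> / (2*(\<bar>y\<bar>+1)) < 1" by (subst pos_divide_less_eq) auto
    have "(K/(2*(\<bar>y\<bar>+1))) * \<bar>y\<bar> = K * (\<bar>y\<bar> / (2*(\<bar>y\<bar>+1)))" by simp
    also have "\<dots> < K * 1" using K q by (intro mult_strict_left_mono) auto
    finally show ?thesis by simp
  qed
  finally show False by simp
qed



lemma strong:
  fixes \<Phi> :: "real^'m^'n \<Rightarrow> real" and p :: "real^'n" and q :: "real^'m" and v :: real
  assumes cvx: "convex_on pos_mats \<Phi>"
    and hom: "\<And>t A. t > 0 \<Longrightarrow> A \<in> pos_mats \<Longrightarrow> \<Phi> (t *\<^sub>R A) = t * \<Phi> A"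
    and pp: "p \<in> prob_simplex" and qq: "q \<in> prob_simplex"
    and lb: "\<And>P. P \<in> transport_plans p q \<Longrightarrow> v \<le> \<Phi> P"
  shows "\<exists>\<alpha> \<beta>. legendre \<Phi> (oplus \<alpha> \<beta>) = 0 \<and> v \<le> p \<bullet> \<alpha> + q \<bullet> \<beta>"
proof -
  have p_pos: "\<And>i. p$i > 0" and psum: "(\<Sum>i\<in>UNIV. p$i) = 1" using pp unfolding prob_simplex_def by auto
  have q_pos: "\<And>j. q$j > 0" and qsum: "(\<Sum>j\<in>UNIV. q$j) = 1" using qq unfolding prob_simplex_def by auto
  define one :: "real^'n" where "one = (\<chi> i. 1)"
  define S :: "(((real^'n) \<times> (real^'m)) \<times> real) set" where
    "S = {x. \<exists>A r t. A \<in> pos_mats \<and> \<Phi> A < r \<and> x = ((rowsum A - p + t *\<^sub>R one, colsum A - q), r - v)}"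
  have cS: "convex S"
  proof (rule convexI)
    fix x y and u w :: real
    assume "x \<in> S" "y \<in> S" and u: "0 \<le> u" and w: "0 \<le> w" and uw: "u + w = 1"
    then obtain A1 r1 t1 A2 r2 t2 where
      A1: "A1 \<in> pos_mats" "\<Phi> A1 < r1" "x = ((rowsum A1 - p + t1 *\<^sub>R one, colsum A1 - q), r1 - v)" and
      A2: "A2 \<in> pos_mats" "\<Phi> A2 < r2" "y = ((rowsum A2 - p + t2 *\<^sub>R one, colsum A2 - q), r2 - v)"
      unfolding S_def by blast
    have u1: "u = 1 - w" using uw by simp
    define A where "A = u *\<^sub>R A1 + w *\<^sub>R A2"
    have Apos: "A \<in> pos_mats" unfolding pos_mats_def A_def
    proof (intro CollectI allI)
      fix i j
      have a: "A1$i$j > 0" "A2$i$j > 0" using A1(1) A2(1) unfolding pos_mats_def by auto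
      show "(u *\<^sub>R A1 + w *\<^sub>R A2)$i$j > 0"
      proof (cases "u = 0")
        case True then have "w = 1" using uw by simp
        then show ?thesis using True a by simp
      next
        case False then have "u > 0" using u by simp
        then have "u * A1$i$j > 0" using a by simp
        moreover have "w * A2$i$j \<ge> 0" using w a by simp
        ultimately show ?thesis by simp
      qed
    qed
    have w1: "w \<le> 1" using uw u by simp
    have "\<Phi> A \<le> u * \<Phi> A1 + w * \<Phi> A2"
      using convex_onD[OF cvx w w1 A1(1) A2(1)] unfolding A_def u1 .
    also have "\<dots> < u * r1 + w * r2"
    proof (cases "u = 0")
      case True then have "w = 1" using uw by simp
      then show ?thesis using True A2(2) by simp
    next
      case False then have "u > 0" using u by simp
      then have "u * \<Phi> A1 < u * r1" using A1(2) by simp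
      moreover have "w * \<Phi> A2 \<le> w * r2" using w A2(2) by (intro mult_left_mono) auto
      ultimately show ?thesis by simp
    qed
    finally have lt: "\<Phi> A < u * r1 + w * r2" .
    have "u *\<^sub>R x + w *\<^sub>R y = ((rowsum A - p + (u*t1 + w*t2) *\<^sub>R one, colsum A - q), (u*r1+w*r2) - v)"
      unfolding A1(3) A2(3) A_def rowsum_lin colsum_lin u1 by (simp add: algebra_simps)
    then show "u *\<^sub>R x + w *\<^sub>R y \<in> S" unfolding S_def using Apos lt by blast
  qed
  have P0: "0 \<notin> S"
  proof
    assume "0 \<in> S"
    then obtain A r t where A: "A \<in> pos_mats" "\<Phi> A < r"
      and eq: "0 = ((rowsum A - p + t *\<^sub>R one, colsum A - q), r - v)"
      unfolding S_def by blast
    from eq have e1: "rowsum A - p + t *\<^sub>R one = 0" and e2: "colsum A - q = 0" and e3: "r - v = 0"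
      by (simp_all add: zero_prod_def)
    have e1': "rowsum A = p - t *\<^sub>R one" using e1 by (simp add: algebra_simps eq_neg_iff_add_eq_0)
    have e2': "colsum A = q" using e2 by simp
    have sumeq: "(\<Sum>i\<in>UNIV. rowsum A $ i) = (\<Sum>j\<in>UNIV. colsum A $ j)"
      unfolding rowsum_def colsum_def vec_lambda_beta by (rule sum.swap)
    have "(\<Sum>i\<in>UNIV. rowsum A $ i) = (\<Sum>i\<in>UNIV. p$i - t)" unfolding e1' one_def by simp
    also have "\<dots> = 1 - real CARD('n) * t" using psum by (simp add: sum_subtractf)
    finally have "1 - real CARD('n) * t = 1" using sumeq e2' qsum by simp
    then have "t = 0" by simp
    then have "rowsum A = p" using e1' by simp
    then have "A \<in> transport_plans p q" using A(1) e2' tp_iff by blast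
    then have "v \<le> \<Phi> A" by (rule lb)
    then show False using A(2) e3 by simp
  qed
  obtain w where w: "w \<noteq> 0" "\<forall>x\<in>S. 0 \<le> inner w x"
    using separating_hyperplane_set_0[OF cS P0] by blast
  define a where "a = fst (fst w)"
  define b where "b = snd (fst w)"
  define c where "c = snd w"
  have wabc: "w = ((a,b),c)" unfolding a_def b_def c_def by simp
  define G where "G A = a \<bullet> rowsum A + b \<bullet> colsum A - (a \<bullet> p + b \<bullet> q)" for A
  have key: "0 \<le> (G A + c * (r - v)) + t * (a \<bullet> one)" if "A \<in> pos_mats" "\<Phi> A < r" for A r t
  proof -
    have "((rowsum A - p + t *\<^sub>R one, colsum A - q), r - v) \<in> S" unfolding S_def using that by blast
    then have "0 \<le> inner w ((rowsum A - p + t *\<^sub>R one, colsum A - q), r - v)" using w(2) by blast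
    then show ?thesis unfolding wabc G_def
      by (simp add: inner_diff_right inner_add_right inner_real_def algebra_simps)
  qed
  define A0 :: "real^'m^'n" where "A0 = (\<chi> i j. 1)"
  have A0: "A0 \<in> pos_mats" unfolding A0_def by (rule ones_pos)
  have sa: "a \<bullet> one = 0"
    by (rule aux_lin0) (rule key[OF A0, of "\<Phi> A0 + 1"], simp)
  have c0: "0 \<le> c"
  proof (rule aux_pos)
    fix R :: real assume R: "R > 0"
    have "0 \<le> (G A0 + c * (\<Phi> A0 + R - v)) + 0 * (a \<bullet> one)" using key[OF A0, of "\<Phi> A0 + R" 0] R by simp
    then show "0 \<le> (G A0 + c * (\<Phi> A0 - v)) + c * R" by (simp add: algebra_simps)
  qed
  have main: "0 \<le> G A + c * (\<Phi> A - v)" if "A \<in> pos_mats" for A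
  proof (rule aux_lim[OF _ c0])
    fix d :: real assume d: "d > 0"
    have "0 \<le> (G A + c * (\<Phi> A + d - v)) + 0 * (a \<bullet> one)" using key[OF that, of "\<Phi> A + d" 0] d by simp
    then show "0 \<le> (G A + c * (\<Phi> A - v)) + c * d" by (simp add: algebra_simps)
  qed
  show ?thesis
  proof (cases "c = 0")
    case True
    then have G0: "\<And>A. A \<in> pos_mats \<Longrightarrow> 0 \<le> G A" using main by simp
    define D where "D = oplus a b"
    have GD: "G A = mat_pair A D - (a \<bullet> p + b \<bullet> q)" for A unfolding G_def D_def mp_oplus by simp
    define P0 :: "real^'m^'n" where "P0 = (\<chi> i j. p$i * q$j)"
    have P0r: "rowsum P0 = p" unfolding rowsum_def P0_def
      by (simp add: vec_eq_iff sum_distrib_left[symmetric] qsum)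
    have P0c: "colsum P0 = q" unfolding colsum_def P0_def
      by (simp add: vec_eq_iff sum_distrib_right[symmetric] psum)
    have GP0: "mat_pair P0 D = a \<bullet> p + b \<bullet> q" unfolding D_def mp_oplus P0r P0c ..
    define s where "s = 1 / (norm D + 1)"
    have s: "s > 0" unfolding s_def by (simp add: add_nonneg_pos)
    have sD: "s * norm D < 1"
    proof -
      have "s * norm D < s * (norm D + 1)" using s by simp
      also have "\<dots> = 1"
      proof -
        have "norm D + 1 \<noteq> 0" using norm_ge_zero[of D] by linarith
        then show ?thesis unfolding s_def by simp
      qed
      finally show ?thesis .
    qed
    define A1 :: "real^'m^'n" where "A1 = (\<chi> i j. P0$i$j * (1 - s * D$i$j))"
    have A1pos: "A1 \<in> pos_mats" unfolding pos_mats_def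
    proof (intro CollectI allI)
      fix i j
      have "\<bar>D$i$j\<bar> \<le> norm (D$i)" by (rule component_le_norm_cart)
      also have "\<dots> \<le> norm D" by (rule Finite_Cartesian_Product.norm_nth_le)
      finally have "s * \<bar>D$i$j\<bar> \<le> s * norm D" using s by (intro mult_left_mono) auto
      moreover have "s * D$i$j \<le> s * \<bar>D$i$j\<bar>" using s by (intro mult_left_mono) auto
      ultimately have "1 - s * D$i$j > 0" using sD by linarith
      moreover have "P0$i$j > 0" unfolding P0_def using p_pos q_pos by simp
      ultimately show "A1$i$j > 0" unfolding A1_def by simp
    qed
    define Q where "Q = (\<Sum>i\<in>UNIV. \<Sum>j\<in>UNIV. P0$i$j * (D$i$j)^2)"
    have mA1: "mat_pair A1 D = mat_pair P0 D - s * Q"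
      unfolding mat_pair_def A1_def Q_def
      by (simp add: algebra_simps sum_subtractf sum_distrib_left power2_eq_square)
    have "0 \<le> G A1" using G0 A1pos .
    then have "s * Q \<le> 0" unfolding GD mA1 GP0 by simp
    then have Qle: "Q \<le> 0" using s by (simp add: mult_le_0_iff)
    have nn: "0 \<le> P0$i$j * (D$i$j)^2" for i j
      unfolding P0_def using p_pos[of i] q_pos[of j] by (intro mult_nonneg_nonneg) auto
    have "Q = 0" using Qle nn unfolding Q_def by (meson antisym sum_nonneg)
    then have "\<forall>i\<in>UNIV. (\<Sum>j\<in>UNIV. P0$i$j * (D$i$j)^2) = 0" unfolding Q_def
      by (subst (asm) sum_nonneg_eq_0_iff) (auto intro: sum_nonneg nn)
    then have "P0$i$j * (D$i$j)^2 = 0" for i j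
      using sum_nonneg_eq_0_iff[of UNIV "\<lambda>j. P0$i$j * (D$i$j)^2"] nn by auto
    moreover have "P0$i$j > 0" for i j unfolding P0_def using p_pos q_pos by simp
    ultimately have Dz: "D$i$j = 0" for i j by (metis less_irrefl power_eq_0_iff mult_eq_0_iff)
    then have abz: "a$i + b$j = 0" for i j using Dz[of i j] unfolding D_def oplus_def by simp
    have asum: "(\<Sum>i\<in>UNIV. a$i) = 0" using sa unfolding inner_vec_def one_def by simp
    have bz: "b$j = 0" for j
    proof -
      have "(\<Sum>i\<in>UNIV. a$i + b$j) = 0" using abz by simp
      then have "(\<Sum>i\<in>UNIV. a$i) + real CARD('n) * b$j = 0" by (simp add: sum.distrib)
      then show ?thesis using asum by simp
    qed
    have az: "a$i = 0" for i using abz[of i undefined] bz[of undefined] by simp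
    have "w = 0" unfolding wabc using az bz True by (simp add: vec_eq_iff zero_prod_def)
    then show ?thesis using w(1) by simp
  next
    case False
    then have cp: "c > 0" using c0 by simp
    define \<alpha> where "\<alpha> = (-1/c) *\<^sub>R a"
    define \<beta> where "\<beta> = (-1/c) *\<^sub>R b"
    define u where "u = oplus \<alpha> \<beta>"
    have mpu: "mat_pair A u = (-1/c) * (a \<bullet> rowsum A + b \<bullet> colsum A)" for A
      unfolding u_def mp_oplus \<alpha>_def \<beta>_def by (simp add: algebra_simps)
    have pab: "p \<bullet> \<alpha> + q \<bullet> \<beta> = (-1/c) * (a \<bullet> p + b \<bullet> q)"
      unfolding \<alpha>_def \<beta>_def by (simp add: algebra_simps inner_commute)
    define K where "K = v - (p \<bullet> \<alpha> + q \<bullet> \<beta>)"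
    have ineq: "mat_pair A u + K \<le> \<Phi> A" if "A \<in> pos_mats" for A
    proof -
      have "0 \<le> (G A + c * (\<Phi> A - v)) / c" using main[OF that] cp by simp
      also have "(G A + c * (\<Phi> A - v)) / c = \<Phi> A - (mat_pair A u + K)"
        unfolding G_def K_def mpu pab using cp by (simp add: field_simps)
      finally show ?thesis by simp
    qed
    have le: "mat_pair A u \<le> \<Phi> A" if "A \<in> pos_mats" for A
    proof -
      have "K \<le> t * (\<Phi> A - mat_pair A u)" if t: "t > 0" for t
        using ineq[OF scale_pos[OF t \<open>A \<in> pos_mats\<close>]] hom[OF t \<open>A \<in> pos_mats\<close>] mp_scale[of t A u]
        by (simp add: algebra_simps)
      then have "0 \<le> \<Phi> A - mat_pair A u" by (rule aux_y)
      then show ?thesis by simp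
    qed
    have "K \<le> t * (\<Phi> A0 - mat_pair A0 u)" if t: "t > 0" for t
      using ineq[OF scale_pos[OF t A0]] hom[OF t A0] mp_scale[of t A0 u]
      by (simp add: algebra_simps)
    then have "K \<le> 0" by (rule aux_K)
    then have "v \<le> p \<bullet> \<alpha> + q \<bullet> \<beta>" unfolding K_def by simp
    moreover have "legendre \<Phi> (oplus \<alpha> \<beta>) = 0" using legendre_zero[OF hom le] unfolding u_def by blast
    ultimately show ?thesis by blast
  qed
qed



theorem lemmaA2:
  fixes \<Phi> :: "real^'m^'n \<Rightarrow> real" and p :: "real^'n" and q :: "real^'m"
  assumes "convex_on pos_mats \<Phi>"
    and "\<And>t A. t > 0 \<Longrightarrow> A \<in> pos_mats \<Longrightarrow> \<Phi> (t *\<^sub>R A) = t * \<Phi> A"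
    and "p \<in> prob_simplex" and "q \<in> prob_simplex"
  shows "(INF P\<in>transport_plans p q. ereal (\<Phi> P)) =
         (SUP ab\<in>{(\<alpha>, \<beta>). legendre \<Phi> (oplus \<alpha> \<beta>) = 0}. ereal (p \<bullet> fst ab + q \<bullet> snd ab))"
proof (rule antisym)
  have weak: "p \<bullet> \<alpha> + q \<bullet> \<beta> \<le> \<Phi> P" if "P \<in> transport_plans p q" "legendre \<Phi> (oplus \<alpha> \<beta>) = 0" for P \<alpha> \<beta>
  proof -
    have P: "P \<in> pos_mats" "rowsum P = p" "colsum P = q" using that(1) tp_iff by auto
    have "mat_pair P (oplus \<alpha> \<beta>) \<le> \<Phi> P" using legendre_le[OF that(2) P(1)] .
    then show ?thesis unfolding mp_oplus P(2,3) by (simp add: inner_commute)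
  qed
  show "(SUP ab\<in>{(\<alpha>, \<beta>). legendre \<Phi> (oplus \<alpha> \<beta>) = 0}. ereal (p \<bullet> fst ab + q \<bullet> snd ab))
      \<le> (INF P\<in>transport_plans p q. ereal (\<Phi> P))"
  proof (rule SUP_least, rule INF_greatest)
    fix ab P assume "ab \<in> {(\<alpha>, \<beta>). legendre \<Phi> (oplus \<alpha> \<beta>) = 0}" "P \<in> transport_plans p q"
    then show "ereal (p \<bullet> fst ab + q \<bullet> snd ab) \<le> ereal (\<Phi> P)" using weak by (cases ab) auto
  qed
  have p_pos: "\<And>i. p$i > 0" and psum: "(\<Sum>i\<in>UNIV. p$i) = 1" using assms(3) unfolding prob_simplex_def by auto
  have q_pos: "\<And>j. q$j > 0" and qsum: "(\<Sum>j\<in>UNIV. q$j) = 1" using assms(4) unfolding prob_simplex_def by auto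
  define P0 :: "real^'m^'n" where "P0 = (\<chi> i j. p$i * q$j)"
  have P0r: "rowsum P0 = p" unfolding rowsum_def P0_def
    by (simp add: vec_eq_iff sum_distrib_left[symmetric] qsum)
  have P0c: "colsum P0 = q" unfolding colsum_def P0_def
    by (simp add: vec_eq_iff sum_distrib_right[symmetric] psum)
  have P0pos: "P0 \<in> pos_mats" unfolding pos_mats_def P0_def using p_pos q_pos by simp
  have P0t: "P0 \<in> transport_plans p q" using tp_iff P0r P0c P0pos by blast
  define L where "L = (INF P\<in>transport_plans p q. ereal (\<Phi> P))"
  have Lle: "L \<le> ereal (\<Phi> P0)" unfolding L_def by (rule INF_lower[OF P0t])
  show "(INF P\<in>transport_plans p q. ereal (\<Phi> P))
      \<le> (SUP ab\<in>{(\<alpha>, \<beta>). legendre \<Phi> (oplus \<alpha> \<beta>) = 0}. ereal (p \<bullet> fst ab + q \<bullet> snd ab))"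
  proof (cases L)
    case (real v)
    have "v \<le> \<Phi> P" if "P \<in> transport_plans p q" for P
    proof -
      have "L \<le> ereal (\<Phi> P)" unfolding L_def by (rule INF_lower[OF that])
      then show ?thesis using real by simp
    qed
    then obtain \<alpha> \<beta> where ab: "legendre \<Phi> (oplus \<alpha> \<beta>) = 0" "v \<le> p \<bullet> \<alpha> + q \<bullet> \<beta>"
      using strong[OF assms] by blast
    have "ereal (p \<bullet> fst (\<alpha>,\<beta>) + q \<bullet> snd (\<alpha>,\<beta>))
       \<le> (SUP ab\<in>{(\<alpha>, \<beta>). legendre \<Phi> (oplus \<alpha> \<beta>) = 0}. ereal (p \<bullet> fst ab + q \<bullet> snd ab))"
      by (rule SUP_upper) (use ab in simp)
    moreover have "L \<le> ereal (p \<bullet> \<alpha> + q \<bullet> \<beta>)" using real ab(2) by simp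
    ultimately show ?thesis unfolding L_def by simp
  next
    case PInf then show ?thesis using Lle by simp
  next
    case MInf then show ?thesis unfolding L_def by simp
  qed
qed

end
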